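(* Let $G$ and $H$ be finite simple graphs, and let $u\in V(G)$, $v\in V(H)$. Then \[\mathrm{dp}_{G\times H}((u,v))=x^{\deg_G u}\,\mathrm{dp}_H(v)+x^{\deg_H v}\,\mathrm{dp}_G(u).\]
   Context: For a vertex $w$ of a simple graph $\Gamma$, the degree polynomial $\mathrm{dp}_\Gamma(w)\in\mathbb{Z}[x]$ is the polynomial in which the coefficient of $x^{i}$ is the number of neighbors of $w$ in $\Gamma$ having degree $i$ in $\Gamma$ ($\mathrm{dp}_\Gamma(w)=0$ if $w$ is isolated). The Cartesian product $G\times H$ is the simple graph on $V(G)\times V(H)$ in which $(u_1,v_1)\sim(u_2,v_2)$ if and only if either $u_1=u_2$ and $v_1\sim v_2$ in $H$, or $v_1=v_2$ and $u_1\sim u_2$ in $G$. *)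

theory Defs
  imports "HOL-Computational_Algebra.Polynomial"
begin

definition finite_simple_graph :: "'a set \<Rightarrow> ('a \<Rightarrow> 'a \<Rightarrow> bool) \<Rightarrow> bool" where
  "finite_simple_graph V E \<longleftrightarrow> finite V \<and>
     (\<forall>x y. E x y \<longrightarrow> x \<in> V \<and> y \<in> V) \<and>
     (\<forall>x y. E x y \<longrightarrow> E y x) \<and> (\<forall>x. \<not> E x x)"

definition neighbors :: "'a set \<Rightarrow> ('a \<Rightarrow> 'a \<Rightarrow> bool) \<Rightarrow> 'a \<Rightarrow> 'a set" where
  "neighbors V E w = {y \<in> V. E w y}"

definition vdeg :: "'a set \<Rightarrow> ('a \<Rightarrow> 'a \<Rightarrow> bool) \<Rightarrow> 'a \<Rightarrow> nat" where
  "vdeg V E w = card (neighbors V E w)"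

definition deg_poly :: "'a set \<Rightarrow> ('a \<Rightarrow> 'a \<Rightarrow> bool) \<Rightarrow> 'a \<Rightarrow> int poly" where
  "deg_poly V E w = (\<Sum>y\<in>neighbors V E w. monom 1 (vdeg V E y))"

definition cart_edges :: "('a \<Rightarrow> 'a \<Rightarrow> bool) \<Rightarrow> ('b \<Rightarrow> 'b \<Rightarrow> bool)
    \<Rightarrow> ('a \<times> 'b) \<Rightarrow> ('a \<times> 'b) \<Rightarrow> bool" where
  "cart_edges EG EH p q \<longleftrightarrow>
     (fst p = fst q \<and> EH (snd p) (snd q)) \<or> (snd p = snd q \<and> EG (fst p) (fst q))"

end

theory Submission
  imports Defs
begin

lemma nbr_prod:
  assumes G: "finite_simple_graph VG EG" and H: "finite_simple_graph VH EH"
    and a: "a \<in> VG" and b: "b \<in> VH"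
  shows "neighbors (VG \<times> VH) (cart_edges EG EH) (a, b)
     = Pair a ` neighbors VH EH b \<union> (\<lambda>x. (x, b)) ` neighbors VG EG a"
  using G H a b unfolding neighbors_def cart_edges_def finite_simple_graph_def
  by auto

lemma nbr_disj:
  assumes G: "finite_simple_graph VG EG" and H: "finite_simple_graph VH EH"
  shows "Pair a ` neighbors VH EH b \<inter> (\<lambda>x. (x, b)) ` neighbors VG EG a = {}"
  using G H unfolding neighbors_def finite_simple_graph_def by auto

lemma fin_nbr: "finite_simple_graph V E \<Longrightarrow> finite (neighbors V E w)"
  unfolding neighbors_def finite_simple_graph_def by auto

lemma deg_prod:
  assumes G: "finite_simple_graph VG EG" and H: "finite_simple_graph VH EH"
    and a: "a \<in> VG" and b: "b \<in> VH"
  shows "vdeg (VG \<times> VH) (cart_edges EG EH) (a, b) = vdeg VG EG a + vdeg VH EH b"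
proof -
  have "card (Pair a ` neighbors VH EH b \<union> (\<lambda>x. (x, b)) ` neighbors VG EG a)
     = card (Pair a ` neighbors VH EH b) + card ((\<lambda>x. (x, b)) ` neighbors VG EG a)"
    by (rule card_Un_disjoint) (use fin_nbr[OF G] fin_nbr[OF H] nbr_disj[OF G H] in auto)
  also have "\<dots> = vdeg VH EH b + vdeg VG EG a"
    unfolding vdeg_def by (simp add: card_image inj_on_def)
  finally show ?thesis unfolding vdeg_def nbr_prod[OF assms] by simp
qed

theorem theorem4p16:
  fixes VG :: "'a set" and EG :: "'a \<Rightarrow> 'a \<Rightarrow> bool"
    and VH :: "'b set" and EH :: "'b \<Rightarrow> 'b \<Rightarrow> bool"
  assumes "finite_simple_graph VG EG" and "finite_simple_graph VH EH"
    and "u \<in> VG" and "v \<in> VH"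
  shows "deg_poly (VG \<times> VH) (cart_edges EG EH) (u, v)
         = monom 1 (vdeg VG EG u) * deg_poly VH EH v
           + monom 1 (vdeg VH EH v) * deg_poly VG EG u"
proof -
  note G = assms(1) and H = assms(2)
  let ?P = "VG \<times> VH" and ?E = "cart_edges EG EH"
  have inG: "x \<in> VG" if "x \<in> neighbors VG EG u" for x
    using that unfolding neighbors_def by auto
  have inH: "y \<in> VH" if "y \<in> neighbors VH EH v" for y
    using that unfolding neighbors_def by auto
  have "deg_poly ?P ?E (u, v)
      = (\<Sum>q\<in>Pair u ` neighbors VH EH v. monom 1 (vdeg ?P ?E q))
      + (\<Sum>q\<in>(\<lambda>x. (x, v)) ` neighbors VG EG u. monom 1 (vdeg ?P ?E q))"
    unfolding deg_poly_def nbr_prod[OF assms]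
    by (rule sum.union_disjoint) (use fin_nbr[OF G] fin_nbr[OF H] nbr_disj[OF G H] in auto)
  also have "(\<Sum>q\<in>Pair u ` neighbors VH EH v. monom 1 (vdeg ?P ?E q))
      = (\<Sum>y\<in>neighbors VH EH v. (monom 1 (vdeg VG EG u) * monom 1 (vdeg VH EH y) :: int poly))"
    by (subst sum.reindex) (auto simp: inj_on_def deg_prod[OF G H assms(3) inH] mult_monom intro!: sum.cong)
  also have "(\<Sum>q\<in>(\<lambda>x. (x, v)) ` neighbors VG EG u. monom 1 (vdeg ?P ?E q))
      = (\<Sum>x\<in>neighbors VG EG u. (monom 1 (vdeg VH EH v) * monom 1 (vdeg VG EG x) :: int poly))"
    by (subst sum.reindex) (auto simp: inj_on_def deg_prod[OF G H inG assms(4)] mult_monom add.commute intro!: sum.cong)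
  finally show ?thesis unfolding deg_poly_def by (simp add: sum_distrib_left)
qed

end
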